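(* $M_{RC}^\mathcal{K}=(\Pi,\sigma,\gamma)$ is a model of $\mathcal{K}$.
   Context: DRSL setting: a ranked standpoint structure $M=(\Pi,\sigma,\gamma)$ has a nonempty set $\Pi$ of precisifications, $\sigma$ mapping each standpoint symbol to a nonempty subset of $\Pi$ with $\sigma( * )=\Pi$, and $\gamma$ mapping each precisification to a ranked interpretation (a convex function from classical valuations to $\mathds{N}\cup\{\infty\}$); $M,\pi\Vdash\phi$ iff $\gamma(\pi)\Vdash\phi$ for a propositional KLM formula $\phi$ ($\phi::=\alpha\mid\alpha\mathrel{|}\!\sim\beta\mid\phi\wedge\phi$), $M,\pi\Vdash\Box_s\psi$ (resp. $\Diamond_s\psi$) iff $\psi$ holds at all (resp. some) $\pi'\in\sigma(s)$, and $M\Vdash\psi$ iff it holds at every $\pi$; $M$ is a model of $\mathcal{K}$ if it satisfies every formula of $\mathcal{K}$. Let $\mathcal{K}$ be a DRSL knowledge base in normal form (formulas $\#_s\phi$, $\#\in\{\Box,\Diamond\}$, $\phi$ a KLM formula, plus sharpening statements $s_1\preceq s_2$), $S$ its set of standpoints, and $\preceq^+$ the reflexive-transitive closure of its sharpening statements (with $s\preceq^+*$). Define $K_s=\{\phi\mid\Box_t\phi\in\mathcal{K}, s\preceq^+t\}$ and $K_s^\phi=K_s\cup\{\phi\}$ for $\Diamond_s\phi\in\mathcal{K}$. For a propositional KLM knowledge base $K$, $R^K_{RC}$ is its rational closure ranked model (the minimum ranked model of $K$ under the pointwise order). Then $M_{RC}^\mathcal{K}$ has $\Pi=\{\pi_s\mid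 s\in S-\{*\}\}\cup\{\pi_s^\phi\mid\Diamond_s\phi\in\mathcal{K}\}$, $\sigma(s)=\{\pi_t\mid t\preceq^+s\}\cup\{\pi_t^\phi\mid t\preceq^+s\}$, $\gamma(\pi_s)=R^{K_s}_{RC}$, $\gamma(\pi_s^\phi)=R^{K_s^\phi}_{RC}$. *)

theory Defs
  imports Main "HOL-Library.Extended_Nat"
begin

datatype 'a pform = PAtom 'a | PTop | PBot | PNeg "'a pform"
  | PAnd "'a pform" "'a pform" | POr "'a pform" "'a pform" | PImp "'a pform" "'a pform"

type_synonym 'a valuation = "'a \<Rightarrow> bool"

fun holds :: "'a valuation \<Rightarrow> 'a pform \<Rightarrow> bool" where
  "holds u (PAtom p) = u p"
| "holds u PTop = True"
| "holds u PBot = False"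
| "holds u (PNeg a) = (\<not> holds u a)"
| "holds u (PAnd a b) = (holds u a \<and> holds u b)"
| "holds u (POr a b) = (holds u a \<or> holds u b)"
| "holds u (PImp a b) = (holds u a \<longrightarrow> holds u b)"

type_synonym 'a ranked = "'a valuation \<Rightarrow> enat"

definition ranked_interp :: "'a ranked \<Rightarrow> bool" where
  "ranked_interp R \<longleftrightarrow> (\<forall>u i. R u = enat i \<longrightarrow> (\<forall>j<i. \<exists>v. R v = enat j))"

datatype 'a klm = KProp "'a pform" | KCond "'a pform" "'a pform" | KConj "'a klm" "'a klm"

definition min_worlds :: "'a ranked \<Rightarrow> 'a pform \<Rightarrow> 'a valuation set" where
  "min_worlds R a = {u. R u < \<infinity> \<and> holds u a \<and>
       (\<forall>v. R v < \<infinity> \<and> holds v a \<longrightarrow> R u \<le> R v)}"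

fun rsat :: "'a ranked \<Rightarrow> 'a klm \<Rightarrow> bool" where
  "rsat R (KProp a) = (\<forall>u. R u < \<infinity> \<longrightarrow> holds u a)"
| "rsat R (KCond a b) = (\<forall>u\<in>min_worlds R a. holds u b)"
| "rsat R (KConj f g) = (rsat R f \<and> rsat R g)"

definition ranked_model :: "'a klm set \<Rightarrow> 'a ranked \<Rightarrow> bool" where
  "ranked_model K R \<longleftrightarrow> ranked_interp R \<and> (\<forall>f\<in>K. rsat R f)"

definition rc_model :: "'a klm set \<Rightarrow> 'a ranked" where
  "rc_model K = (THE R. ranked_model K R \<and> (\<forall>R'. ranked_model K R' \<longrightarrow> (\<forall>u. R u \<le> R' u)))"

datatype 's stp = Star | Sp 's

text \<open>Normal-form DRSL statements: box/diamond of a KLM formula, and sharpenings s1 \<preceq> s2.\<close>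
datatype ('a, 's) nf = NBox "'s stp" "'a klm" | NDia "'s stp" "'a klm" | Sharpen "'s stp" "'s stp"

record ('a, 's, 'p) rss =
  Prec :: "'p set"
  Sig :: "'s stp \<Rightarrow> 'p set"
  Gam :: "'p \<Rightarrow> 'a ranked"

definition rss_wf :: "'s stp set \<Rightarrow> ('a, 's, 'p) rss \<Rightarrow> bool" where
  "rss_wf S M \<longleftrightarrow> Prec M \<noteq> {} \<and> (\<forall>s\<in>S. Sig M s \<noteq> {} \<and> Sig M s \<subseteq> Prec M)
     \<and> Sig M Star = Prec M \<and> (\<forall>p\<in>Prec M. ranked_interp (Gam M p))"

fun nf_holds :: "('a, 's, 'p) rss \<Rightarrow> ('a, 's) nf \<Rightarrow> bool" where
  "nf_holds M (NBox s f) = (\<forall>p\<in>Prec M. \<forall>q\<in>Sig M s. rsat (Gam M q) f)"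
| "nf_holds M (NDia s f) = (\<forall>p\<in>Prec M. \<exists>q\<in>Sig M s. rsat (Gam M q) f)"
| "nf_holds M (Sharpen s t) = (Sig M s \<subseteq> Sig M t)"

definition is_model :: "'s stp set \<Rightarrow> ('a, 's, 'p) rss \<Rightarrow> ('a, 's) nf set \<Rightarrow> bool" where
  "is_model S M K \<longleftrightarrow> rss_wf S M \<and> (\<forall>\<psi>\<in>K. nf_holds M \<psi>)"

fun nf_stps :: "('a, 's) nf \<Rightarrow> 's stp set" where
  "nf_stps (NBox s f) = {s}"
| "nf_stps (NDia s f) = {s}"
| "nf_stps (Sharpen s t) = {s, t}"

definition kb_stps :: "('a, 's) nf set \<Rightarrow> 's stp set" where
  "kb_stps K = insert Star (\<Union> (nf_stps ` K))"

definition sharp_rel :: "('a, 's) nf set \<Rightarrow> ('s stp \<times> 's stp) set" where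
  "sharp_rel K = ({(s, t). Sharpen s t \<in> K} \<union> {(s, Star) | s. True})\<^sup>*"

definition Ks :: "('a, 's) nf set \<Rightarrow> 's stp \<Rightarrow> 'a klm set" where
  "Ks K s = {f. \<exists>t. NBox t f \<in> K \<and> (s, t) \<in> sharp_rel K}"

datatype ('a, 's) prec = PStd "'s stp" | PDia "'s stp" "'a klm"

definition M_RC :: "('a, 's) nf set \<Rightarrow> ('a, 's, ('a, 's) prec) rss" where
  "M_RC K = \<lparr> Prec = {PStd s | s. s \<in> kb_stps K - {Star}} \<union> {PDia s f | s f. NDia s f \<in> K},
     Sig = (\<lambda>s. {PStd t | t. t \<in> kb_stps K - {Star} \<and> (t, s) \<in> sharp_rel K}
               \<union> {PDia t f | t f. NDia t f \<in> K \<and> (t, s) \<in> sharp_rel K}),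
     Gam = (\<lambda>p. case p of PStd s \<Rightarrow> rc_model (Ks K s)
                        | PDia s f \<Rightarrow> rc_model (insert f (Ks K s))) \<rparr>"

end

theory Submission
  imports Defs
begin

fun okf :: "'a klm \<Rightarrow> 'a valuation set \<Rightarrow> 'a valuation \<Rightarrow> bool" where
  "okf (KProp a) S u = holds u a"
| "okf (KCond a b) S u = (holds u a \<and> \<not> holds u b \<longrightarrow> (\<exists>v\<in>S. holds v a))"
| "okf (KConj f g) S u = (okf f S u \<and> okf g S u)"

lemma okf_mono: "okf f S u \<Longrightarrow> S \<subseteq> S' \<Longrightarrow> okf f S' u"
  by (induction f) auto

lemma rsat_okf: "rsat R f \<longleftrightarrow> (\<forall>u. R u < \<infinity> \<longrightarrow> okf f {v. R v < R u} u)"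
proof (induction f)
  case (KCond a b)
  show ?case
    unfolding rsat.simps okf.simps min_worlds_def
  proof (intro iffI allI impI ballI)
    fix u assume H: "\<forall>u\<in>{u. R u < \<infinity> \<and> holds u a \<and> (\<forall>v. R v < \<infinity> \<and> holds v a \<longrightarrow> R u \<le> R v)}. holds u b"
      and u: "R u < \<infinity>" and ab: "holds u a \<and> \<not> holds u b"
    then obtain v where "R v < \<infinity>" "holds v a" "\<not> R u \<le> R v" by blast
    then show "\<exists>v\<in>{v. R v < R u}. holds v a" by (auto simp: not_le)
  next
    fix u assume H: "\<forall>u. R u < \<infinity> \<longrightarrow> holds u a \<and> \<not> holds u b \<longrightarrow> (\<exists>v\<in>{v. R v < R u}. holds v a)"
     and u: "u \<in> {u. R u < \<infinity> \<and> holds u a \<and> (\<forall>v. R v < \<infinity> \<and> holds v a \<longrightarrow> R u \<le> R v)}"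
    show "holds u b"
    proof (rule ccontr)
      assume "\<not> holds u b"
      then obtain v where "R v < R u" "holds v a" using H u by blast
      moreover have "R v < \<infinity>" using calculation u by auto
      ultimately show False using u by (auto simp: not_le)
    qed
  qed
qed auto

definition okK :: "'a klm set \<Rightarrow> 'a valuation set \<Rightarrow> 'a valuation \<Rightarrow> bool" where
  "okK K S u \<longleftrightarrow> (\<forall>f\<in>K. okf f S u)"

fun B :: "'a klm set \<Rightarrow> nat \<Rightarrow> 'a valuation set" where
  "B K 0 = {}"
| "B K (Suc n) = B K n \<union> {u. okK K (B K n) u}"

lemma B_mono: "m \<le> n \<Longrightarrow> B K m \<subseteq> B K n"
  by (induction n) (auto simp: le_Suc_eq)

definition Rg :: "'a klm set \<Rightarrow> 'a ranked" where
  "Rg K u = (if \<exists>n. u \<in> B K n then enat (LEAST n. u \<in> B K (Suc n)) else \<infinity>)"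

lemma B_Rg: "u \<in> B K n \<longleftrightarrow> Rg K u < enat n"
proof
  assume u: "u \<in> B K n"
  then obtain m where n: "n = Suc m" by (cases n) auto
  have "(LEAST k. u \<in> B K (Suc k)) \<le> m" using u n by (intro Least_le) simp
  moreover have "\<exists>n. u \<in> B K n" using u by blast
  ultimately show "Rg K u < enat n" using n unfolding Rg_def by simp
next
  assume "Rg K u < enat n"
  then obtain k where "Rg K u = enat k" "k < n" by (cases "Rg K u") auto
  then have "\<exists>n. u \<in> B K n" "k = (LEAST k. u \<in> B K (Suc k))"
    unfolding Rg_def by (auto split: if_splits)
  then have "u \<in> B K (Suc k)" by (metis (mono_tags, lifting) LeastI B_mono le_add2 plus_1_eq_Suc subsetD)
  then show "u \<in> B K n" using B_mono[of "Suc k" n K] \<open>k < n\<close> by auto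
qed

lemma Rg_below: "{v. Rg K v < enat k} = B K k"
  using B_Rg by blast

lemma Rg_ok: assumes "Rg K u = enat k" shows "okK K (B K k) u"
proof -
  have "u \<in> B K (Suc k)" using B_Rg[of u K "Suc k"] assms by simp
  moreover have "u \<notin> B K k" using B_Rg[of u K k] assms by simp
  ultimately show ?thesis by simp
qed

lemma B_stable: assumes "B K (Suc j) = B K j" shows "j \<le> n \<Longrightarrow> B K n = B K j"
proof (induction n)
  case 0 then show ?case by simp
next
  case (Suc n)
  show ?case
  proof (cases "j \<le> n")
    case True
    then have "B K n = B K j" using Suc by simp
    then have "B K (Suc n) = B K (Suc j)" by simp
    then show ?thesis using assms by simp
  next
    case False
    then have "j = Suc n" using Suc by simp
    then show ?thesis by simp
  qed
qed

lemma Rg_model: "ranked_model K (Rg K)"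
  unfolding ranked_model_def
proof
  show "ranked_interp (Rg K)"
    unfolding ranked_interp_def
  proof (intro allI impI)
    fix u i j assume ui: "Rg K u = enat i" and ji: "j < i"
    have u1: "u \<in> B K (Suc i)" using B_Rg[of u K "Suc i"] ui by simp
    have u2: "u \<notin> B K i" using B_Rg[of u K i] ui by simp
    have "B K (Suc j) \<noteq> B K j"
    proof
      assume eq: "B K (Suc j) = B K j"
      have "B K (Suc i) = B K j" using B_stable[OF eq, of "Suc i"] ji by simp
      moreover have "B K i = B K j" using B_stable[OF eq, of i] ji by simp
      ultimately show False using u1 u2 by simp
    qed
    then obtain v where v1: "v \<in> B K (Suc j)" and v2: "v \<notin> B K j" using B_mono[of j "Suc j" K] by auto
    have a: "Rg K v < enat (Suc j)" using v1 B_Rg[of v K "Suc j"] by simp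
    have b: "\<not> Rg K v < enat j" using v2 B_Rg[of v K j] by simp
    have "Rg K v = enat j"
    proof (cases "Rg K v")
      case (enat m)
      then have "m < Suc j" "\<not> m < j" using a b by simp_all
      then show ?thesis using enat by simp
    next
      case infinity
      then show ?thesis using a by simp
    qed
    then show "\<exists>v. Rg K v = enat j" by blast
  qed
next
  show "\<forall>f\<in>K. rsat (Rg K) f"
  proof (intro ballI)
    fix f assume f: "f \<in> K"
    show "rsat (Rg K) f" unfolding rsat_okf
    proof (intro allI impI)
      fix u assume "Rg K u < \<infinity>"
      then obtain k where k: "Rg K u = enat k" by (cases "Rg K u") auto
      have "okf f (B K k) u" using Rg_ok[OF k] f unfolding okK_def by blast
      moreover have "{v. Rg K v < Rg K u} = B K k" unfolding k by (rule Rg_below)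
      ultimately show "okf f {v. Rg K v < Rg K u} u" by simp
    qed
  qed
qed

lemma Rg_min: assumes "ranked_model K R" shows "Rg K u \<le> R u"
proof -
  have sat: "\<forall>f\<in>K. rsat R f" using assms unfolding ranked_model_def by auto
  have main: "R u = enat n \<Longrightarrow> u \<in> B K (Suc n)" for n u
  proof (induction n arbitrary: u rule: less_induct)
    case (less n)
    have "{v. R v < R u} \<subseteq> B K n"
    proof
      fix v assume "v \<in> {v. R v < R u}"
      then obtain m where "R v = enat m" "m < n" using less.prems by (cases "R v") auto
      then have "v \<in> B K (Suc m)" using less.IH by blast
      then show "v \<in> B K n" using B_mono[of "Suc m" n K] \<open>m < n\<close> by auto
    qed
    moreover have "\<forall>f\<in>K. okf f {v. R v < R u} u"
    proof
      fix f assume "f \<in> K"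
      then have "rsat R f" using sat by blast
      moreover have "R u < \<infinity>" using less.prems by simp
      ultimately show "okf f {v. R v < R u} u" unfolding rsat_okf by blast
    qed
    ultimately have "okK K (B K n) u" unfolding okK_def using okf_mono by blast
    then show ?case by simp
  qed
  show ?thesis
  proof (cases "R u")
    case (enat n)
    then have "u \<in> B K (Suc n)" by (rule main)
    then have "Rg K u < enat (Suc n)" by (simp only: B_Rg)
    then show ?thesis using enat by (cases "Rg K u") auto
  qed simp
qed

lemma rc_model_eq: "rc_model K = Rg K"
  unfolding rc_model_def
proof (rule the_equality)
  show "ranked_model K (Rg K) \<and> (\<forall>R'. ranked_model K R' \<longrightarrow> (\<forall>u. Rg K u \<le> R' u))"
  proof (intro conjI allI impI)
    show "ranked_model K (Rg K)" by (rule Rg_model)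
    fix R' u assume "ranked_model K R'"
    then show "Rg K u \<le> R' u" by (rule Rg_min)
  qed
next
  fix R assume R: "ranked_model K R \<and> (\<forall>R'. ranked_model K R' \<longrightarrow> (\<forall>u. R u \<le> R' u))"
  show "R = Rg K"
  proof
    fix u
    have "R u \<le> Rg K u" using R Rg_model[of K] by blast
    moreover have "Rg K u \<le> R u" using R Rg_min[of K R] by blast
    ultimately show "R u = Rg K u" by (rule order_antisym)
  qed
qed

lemma rc_model_ok: "ranked_model K (rc_model K)"
  unfolding rc_model_eq by (rule Rg_model)

lemma rc_sat: "f \<in> K \<Longrightarrow> rsat (rc_model K) f"
proof -
  assume "f \<in> K"
  moreover have "\<forall>f\<in>K. rsat (rc_model K) f" using rc_model_ok[of K] unfolding ranked_model_def by (rule conjunct2)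
  ultimately show ?thesis by (rule bspec[rotated])
qed

lemma rc_interp: "ranked_interp (rc_model K)"
  using rc_model_ok[of K] unfolding ranked_model_def by (rule conjunct1)

lemma Prec_PStd: "PStd t \<in> Prec (M_RC K) \<longleftrightarrow> t \<in> kb_stps K - {Star}"
  by (simp add: M_RC_def)
lemma Prec_PDia: "PDia t f \<in> Prec (M_RC K) \<longleftrightarrow> NDia t f \<in> K"
  by (simp add: M_RC_def)
lemma Sig_PStd: "PStd t \<in> Sig (M_RC K) s \<longleftrightarrow> t \<in> kb_stps K - {Star} \<and> (t, s) \<in> sharp_rel K"
  by (simp add: M_RC_def)
lemma Sig_PDia: "PDia t f \<in> Sig (M_RC K) s \<longleftrightarrow> NDia t f \<in> K \<and> (t, s) \<in> sharp_rel K"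
  by (simp add: M_RC_def)
lemma Gam_PStd: "Gam (M_RC K) (PStd t) = rc_model (Ks K t)"
  by (simp add: M_RC_def)
lemma Gam_PDia: "Gam (M_RC K) (PDia t f) = rc_model (insert f (Ks K t))"
  by (simp add: M_RC_def)

theorem lemma5:
  fixes K :: "('a::finite, 's) nf set"
  assumes "finite K"
    and "(\<exists>s\<in>kb_stps K. s \<noteq> Star) \<or> (\<exists>s f. NDia s f \<in> K)"
  shows "is_model (kb_stps K) (M_RC K) K"
proof -
  have star: "(t, Star) \<in> sharp_rel K" for t unfolding sharp_rel_def by blast
  have refl: "(t, t) \<in> sharp_rel K" for t unfolding sharp_rel_def by blast
  have sh: "Sharpen s t \<in> K \<Longrightarrow> (s, t) \<in> sharp_rel K" for s t unfolding sharp_rel_def by blast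
  have tr: "(a, b) \<in> sharp_rel K \<Longrightarrow> (b, c) \<in> sharp_rel K \<Longrightarrow> (a, c) \<in> sharp_rel K" for a b c
    unfolding sharp_rel_def by (meson rtrancl_trans)
  have Pne: "Prec (M_RC K) \<noteq> {}"
    using assms(2)
  proof
    assume "\<exists>s\<in>kb_stps K. s \<noteq> Star"
    then obtain s where "s \<in> kb_stps K - {Star}" by blast
    then have "PStd s \<in> Prec (M_RC K)" by (simp only: Prec_PStd)
    then show ?thesis by blast
  next
    assume "\<exists>s f. NDia s f \<in> K"
    then obtain s f where "NDia s f \<in> K" by blast
    then have "PDia s f \<in> Prec (M_RC K)" by (simp only: Prec_PDia)
    then show ?thesis by blast
  qed
  have SigPrec: "q \<in> Sig (M_RC K) s \<longleftrightarrow> q \<in> Prec (M_RC K) \<and> (case q of PStd t \<Rightarrow> (t, s) \<in> sharp_rel K | PDia t f \<Rightarrow> (t, s) \<in> sharp_rel K)" for q s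
    by (cases q) (simp_all add: Sig_PStd Sig_PDia Prec_PStd Prec_PDia)
  have SigStar: "Sig (M_RC K) Star = Prec (M_RC K)"
  proof
    show "Sig (M_RC K) Star \<subseteq> Prec (M_RC K)" using SigPrec by blast
    show "Prec (M_RC K) \<subseteq> Sig (M_RC K) Star"
    proof
      fix q assume "q \<in> Prec (M_RC K)"
      then show "q \<in> Sig (M_RC K) Star" using SigPrec[of q Star] star by (cases q) simp_all
    qed
  qed
  have wf: "rss_wf (kb_stps K) (M_RC K)"
    unfolding rss_wf_def
  proof (intro conjI ballI)
    show "Prec (M_RC K) \<noteq> {}" by (rule Pne)
    show "Sig (M_RC K) Star = Prec (M_RC K)" by (rule SigStar)
  next
    fix s assume s: "s \<in> kb_stps K"
    show "Sig (M_RC K) s \<noteq> {}"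
    proof (cases "s = Star")
      case True then show ?thesis using Pne SigStar by simp
    next
      case False
      then have "PStd s \<in> Sig (M_RC K) s" using s refl by (simp only: Sig_PStd) blast
      then show ?thesis by blast
    qed
    show "Sig (M_RC K) s \<subseteq> Prec (M_RC K)" using SigPrec by blast
  next
    fix p :: "('a, 's) prec"
    show "ranked_interp (Gam (M_RC K) p)"
      by (cases p) (simp_all only: Gam_PStd Gam_PDia rc_interp)
  qed
  have holds: "nf_holds (M_RC K) \<psi>" if psi: "\<psi> \<in> K" for \<psi>
  proof (cases \<psi>)
    case (NBox s f)
    have "rsat (Gam (M_RC K) q) f" if q: "q \<in> Sig (M_RC K) s" for q
    proof (cases q)
      case (PStd t)
      then have "(t, s) \<in> sharp_rel K" using q by (simp add: Sig_PStd)
      then have "f \<in> Ks K t" using NBox psi unfolding Ks_def by blast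
      then show ?thesis using PStd by (simp add: Gam_PStd rc_sat)
    next
      case (PDia t g)
      then have "(t, s) \<in> sharp_rel K" using q by (simp add: Sig_PDia)
      then have "f \<in> Ks K t" using NBox psi unfolding Ks_def by blast
      then show ?thesis using PDia by (simp add: Gam_PDia rc_sat)
    qed
    then show ?thesis using NBox by simp
  next
    case (NDia s f)
    have "PDia s f \<in> Sig (M_RC K) s" using NDia psi refl by (simp add: Sig_PDia)
    moreover have "rsat (Gam (M_RC K) (PDia s f)) f" by (simp add: Gam_PDia rc_sat)
    ultimately show ?thesis using NDia by auto
  next
    case (Sharpen s t)
    then have st: "(s, t) \<in> sharp_rel K" using sh psi by simp
    have "Sig (M_RC K) s \<subseteq> Sig (M_RC K) t"
    proof
      fix q assume q: "q \<in> Sig (M_RC K) s"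
      then show "q \<in> Sig (M_RC K) t" using SigPrec[of q s] SigPrec[of q t] tr[OF _ st]
        by (cases q) simp_all
    qed
    then show ?thesis using Sharpen by simp
  qed
  show ?thesis unfolding is_model_def
  proof (intro conjI ballI)
    show "rss_wf (kb_stps K) (M_RC K)" by (rule wf)
    fix \<psi> assume "\<psi> \<in> K" then show "nf_holds (M_RC K) \<psi>" by (rule holds)
  qed
qed

end
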